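(* Let $k\ge0$, let $A,B$ be finite alphabets and $f:B^*\to A^*$ a monoid homomorphism. For $w_1,w_2\in B^*$, if $w_1\equiv_k w_2$ then $f(w_1)\equiv_k f(w_2)$.
   Context: For words $u_1,u_2$ over an alphabet, $u_1\equiv_k u_2$ means that $u_1$ and $u_2$ satisfy exactly the same sentences of $FO^2[<,\mathrm{Inv}]$ of quantifier depth at most $k$ (over that alphabet). $FO^2[<,\mathrm{Inv}]$ is two-variable first-order logic with $<$, unary letter predicates $a(x)$, and binary predicates $a(x,y)$ meaning that $a$ occurs at some position strictly between $x$ and $y$. *)

theory Defs
  imports Main
begin

text \<open>Two-variable first-order logic FO2[<,Inv] over an alphabet (the type 'a).
  Positions of a word w are 0 ..< length w.\<close>

datatype var = VX | VY

datatype 'a fo2 =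
    FLess var var
  | FEq var var
  | FLetter 'a var
  | FBetween 'a var var
  | FNot "'a fo2"
  | FAnd "'a fo2" "'a fo2"
  | FOr "'a fo2" "'a fo2"
  | FEx var "'a fo2"

fun qdepth :: "'a fo2 \<Rightarrow> nat" where
  "qdepth (FLess _ _) = 0"
| "qdepth (FEq _ _) = 0"
| "qdepth (FLetter _ _) = 0"
| "qdepth (FBetween _ _ _) = 0"
| "qdepth (FNot \<phi>) = qdepth \<phi>"
| "qdepth (FAnd \<phi> \<psi>) = max (qdepth \<phi>) (qdepth \<psi>)"
| "qdepth (FOr \<phi> \<psi>) = max (qdepth \<phi>) (qdepth \<psi>)"
| "qdepth (FEx _ \<phi>) = Suc (qdepth \<phi>)"

fun fvars :: "'a fo2 \<Rightarrow> var set" where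
  "fvars (FLess x y) = {x, y}"
| "fvars (FEq x y) = {x, y}"
| "fvars (FLetter _ x) = {x}"
| "fvars (FBetween _ x y) = {x, y}"
| "fvars (FNot \<phi>) = fvars \<phi>"
| "fvars (FAnd \<phi> \<psi>) = fvars \<phi> \<union> fvars \<psi>"
| "fvars (FOr \<phi> \<psi>) = fvars \<phi> \<union> fvars \<psi>"
| "fvars (FEx x \<phi>) = fvars \<phi> - {x}"

definition sentence :: "'a fo2 \<Rightarrow> bool" where
  "sentence \<phi> \<longleftrightarrow> fvars \<phi> = {}"

fun sat :: "'a list \<Rightarrow> (var \<Rightarrow> nat) \<Rightarrow> 'a fo2 \<Rightarrow> bool" where
  "sat w s (FLess x y) \<longleftrightarrow> s x < s y"
| "sat w s (FEq x y) \<longleftrightarrow> s x = s y"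
| "sat w s (FLetter a x) \<longleftrightarrow> s x < length w \<and> w ! s x = a"
| "sat w s (FBetween a x y) \<longleftrightarrow>
     (\<exists>z. min (s x) (s y) < z \<and> z < max (s x) (s y) \<and> z < length w \<and> w ! z = a)"
| "sat w s (FNot \<phi>) \<longleftrightarrow> \<not> sat w s \<phi>"
| "sat w s (FAnd \<phi> \<psi>) \<longleftrightarrow> sat w s \<phi> \<and> sat w s \<psi>"
| "sat w s (FOr \<phi> \<psi>) \<longleftrightarrow> sat w s \<phi> \<or> sat w s \<psi>"
| "sat w s (FEx x \<phi>) \<longleftrightarrow> (\<exists>i < length w. sat w (s(x := i)) \<phi>)"

text \<open>A word models a sentence (the assignment is irrelevant for sentences).\<close>
definition models :: "'a list \<Rightarrow> 'a fo2 \<Rightarrow> bool" where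
  "models w \<phi> \<longleftrightarrow> sat w (\<lambda>_. 0) \<phi>"

definition fo2_equiv :: "nat \<Rightarrow> 'a list \<Rightarrow> 'a list \<Rightarrow> bool" where
  "fo2_equiv k u1 u2 \<longleftrightarrow>
     (\<forall>\<phi> :: 'a fo2. sentence \<phi> \<and> qdepth \<phi> \<le> k \<longrightarrow> (models u1 \<phi> \<longleftrightarrow> models u2 \<phi>))"

definition monoid_hom :: "('b list \<Rightarrow> 'a list) \<Rightarrow> bool" where
  "monoid_hom f \<longleftrightarrow> f [] = [] \<and> (\<forall>u v. f (u @ v) = f u @ f v)"

end

theory Submission
  imports Defs
begin


definition lc :: "('b \<Rightarrow> 'a list) \<Rightarrow> 'b list \<Rightarrow> nat \<Rightarrow> nat" where
  "lc g w i = length (concat (map g (take i w)))"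

definition enc :: "('b \<Rightarrow> 'a list) \<Rightarrow> 'b list \<Rightarrow> nat \<Rightarrow> nat \<Rightarrow> nat" where
  "enc g w i r = lc g w i + r"

lemma lc_Suc: "i < length w \<Longrightarrow> lc g w (Suc i) = lc g w i + length (g (w ! i))"
  by (simp add: lc_def take_Suc_conv_app_nth)

lemma lc_mono: "m \<le> n \<Longrightarrow> lc g w m \<le> lc g w n"
proof -
  assume "m \<le> n"
  then have "take n w = take m w @ take (n - m) (drop m w)"
    by (metis le_add_diff_inverse take_add)
  then show ?thesis by (simp add: lc_def)
qed

lemma enc_less:
  assumes "i < length w" "r < length (g (w ! i))" "j < length w" "r' < length (g (w ! j))"
  shows "(enc g w i r < enc g w j r') = (i < j \<or> i = j \<and> r < r')"
proof -
  have A: "enc g w a b < enc g w c d" if "a < c" "a < length w" "b < length (g (w ! a))" for a b c d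
  proof -
    have "enc g w a b < lc g w (Suc a)" using that lc_Suc[of a w g] by (simp add: enc_def)
    also have "\<dots> \<le> lc g w c" using lc_mono[of "Suc a" c g w] that by auto
    finally show ?thesis by (simp add: enc_def)
  qed
  show ?thesis
    using A[of i j r r'] A[of j i r' r] assms
    by (cases i j rule: linorder_cases) (auto simp: enc_def)
qed

lemma enc_nth:
  assumes "i < length w" "r < length (g (w ! i))"
  shows "enc g w i r < length (concat (map g w)) \<and> concat (map g w) ! enc g w i r = g (w ! i) ! r"
proof -
  have "w = take i w @ w ! i # drop (Suc i) w" using assms(1) by (simp add: id_take_nth_drop)
  then have e: "concat (map g w) = concat (map g (take i w)) @ g (w ! i) @ concat (map g (drop (Suc i) w))"
    by (metis concat.simps(2) concat_append list.simps(9) map_append)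
  show ?thesis using assms unfolding e by (simp add: enc_def lc_def nth_append)
qed

lemma enc_decomp:
  "p < length (concat (map g w)) \<Longrightarrow> \<exists>i < length w. \<exists>r < length (g (w ! i)). p = enc g w i r"
proof (induction w arbitrary: p)
  case Nil then show ?case by simp
next
  case (Cons b w)
  show ?case
  proof (cases "p < length (g b)")
    case True
    then show ?thesis by (rule_tac x=0 in exI) (auto simp: enc_def lc_def)
  next
    case False
    have "p - length (g b) < length (concat (map g w))" using Cons.prems False by simp
    then obtain i r where "i < length w" "r < length (g (w ! i))" "p - length (g b) = enc g w i r"
      using Cons.IH by blast
    then show ?thesis using False
      by (rule_tac x="Suc i" in exI) (auto simp: enc_def lc_def)
  qed
qed


definition allL :: "'b::finite list" where "allL = (SOME xs. set xs = UNIV)"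

lemma set_allL: "set (allL :: 'b::finite list) = UNIV"
  unfolding allL_def by (rule someI_ex) (rule finite_list[OF finite_UNIV])

definition ff :: "var \<Rightarrow> 'b fo2" where "ff x = FNot (FEq x x)"

definition disj :: "'b fo2 \<Rightarrow> 'c list \<Rightarrow> ('c \<Rightarrow> 'b fo2) \<Rightarrow> 'b fo2" where
  "disj d xs h = foldr (\<lambda>b acc. FOr (h b) acc) xs d"

lemma sat_disj: "sat w s (disj d xs h) = (sat w s d \<or> (\<exists>b\<in>set xs. sat w s (h b)))"
  unfolding disj_def by (induction xs) auto

lemma fvars_disj: "fvars (disj d xs h) \<subseteq> fvars d \<union> (\<Union>b\<in>set xs. fvars (h b))"
  unfolding disj_def by (induction xs) auto

lemma fvars_disj_le: "fvars d \<subseteq> S \<Longrightarrow> (\<And>b. b \<in> set xs \<Longrightarrow> fvars (h b) \<subseteq> S) \<Longrightarrow> fvars (disj d xs h) \<subseteq> S"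
  unfolding disj_def by (induction xs) auto

lemma qdepth_disj: "qdepth d \<le> n \<Longrightarrow> (\<And>b. b \<in> set xs \<Longrightarrow> qdepth (h b) \<le> n) \<Longrightarrow> qdepth (disj d xs h) \<le> n"
  unfolding disj_def by (induction xs) auto

definition ldisj :: "var \<Rightarrow> ('b::finite \<Rightarrow> bool) \<Rightarrow> 'b fo2" where
  "ldisj x P = disj (ff x) (filter P allL) (\<lambda>b. FLetter b x)"

lemma sat_ldisj: "sat w s (ldisj x P) = (s x < length w \<and> P (w ! s x))"
  by (auto simp: ldisj_def sat_disj ff_def set_allL)

lemma fvars_ldisj: "fvars (ldisj x P) \<subseteq> {x}"
  unfolding ldisj_def by (rule fvars_disj_le) (auto simp: ff_def)

lemma qdepth_ldisj: "qdepth (ldisj x P) = 0"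
  using qdepth_disj[of "ff x" 0 "filter P allL" "\<lambda>b. FLetter b x"] by (auto simp: ldisj_def ff_def)

definition bt :: "('b::finite \<Rightarrow> 'a list) \<Rightarrow> 'a \<Rightarrow> var \<Rightarrow> var \<Rightarrow> nat \<Rightarrow> nat \<Rightarrow> 'b fo2" where
  "bt g a x y ox oy = FOr (ldisj x (\<lambda>b. \<exists>r. ox < r \<and> r < length (g b) \<and> g b ! r = a))
     (FOr (ldisj y (\<lambda>b. \<exists>r. r < oy \<and> r < length (g b) \<and> g b ! r = a))
       (disj (ff x) (filter (\<lambda>c. a \<in> set (g c)) allL) (\<lambda>c. FBetween c x y)))"

fun tr :: "('b::finite \<Rightarrow> 'a list) \<Rightarrow> nat \<Rightarrow> 'a fo2 \<Rightarrow> (var \<Rightarrow> nat) \<Rightarrow> 'b fo2" where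
  "tr g M (FLess x y) ofs = (if ofs x < ofs y then FOr (FLess x y) (FEq x y) else FLess x y)"
| "tr g M (FEq x y) ofs = (if ofs x = ofs y then FEq x y else ff x)"
| "tr g M (FLetter a x) ofs = ldisj x (\<lambda>b. ofs x < length (g b) \<and> g b ! ofs x = a)"
| "tr g M (FBetween a x y) ofs =
     FOr (FAnd (FLess x y) (bt g a x y (ofs x) (ofs y)))
      (FOr (FAnd (FLess y x) (bt g a y x (ofs y) (ofs x)))
        (FAnd (FEq x y) (ldisj x (\<lambda>b. \<exists>r. min (ofs x) (ofs y) < r \<and> r < max (ofs x) (ofs y) \<and> r < length (g b) \<and> g b ! r = a))))"
| "tr g M (FNot \<phi>) ofs = FNot (tr g M \<phi> ofs)"
| "tr g M (FAnd \<phi> \<psi>) ofs = FAnd (tr g M \<phi> ofs) (tr g M \<psi> ofs)"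
| "tr g M (FOr \<phi> \<psi>) ofs = FOr (tr g M \<phi> ofs) (tr g M \<psi> ofs)"
| "tr g M (FEx x \<phi>) ofs = disj (FEx x (FAnd (ldisj x (\<lambda>b. 0 < length (g b))) (tr g M \<phi> (ofs(x := 0)))))
     [1..<M] (\<lambda>r. FEx x (FAnd (ldisj x (\<lambda>b. r < length (g b))) (tr g M \<phi> (ofs(x := r)))))"

lemma fvars_tr: "fvars (tr g M \<phi> ofs) \<subseteq> fvars \<phi>"
proof (induction \<phi> arbitrary: ofs)
  case (FLetter a x) then show ?case using fvars_ldisj by simp
next
  case (FBetween a x y)
  have "fvars (disj (ff x) (filter (\<lambda>c. a \<in> set (g c)) allL) (\<lambda>c. FBetween c x y)) \<subseteq> {x,y}"
    "fvars (disj (ff y) (filter (\<lambda>c. a \<in> set (g c)) allL) (\<lambda>c. FBetween c y x)) \<subseteq> {x,y}"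
    by (rule fvars_disj_le; auto simp: ff_def)+
  then show ?case
    by (auto simp: bt_def ff_def dest!: fvars_ldisj[THEN subsetD])
next
  case (FEx x \<phi>)
  show ?case
  proof
    fix z assume z: "z \<in> fvars (tr g M (FEx x \<phi>) ofs)"
    show "z \<in> fvars (FEx x \<phi>)"
      using subsetD[OF fvars_disj z[simplified]] FEx.IH fvars_ldisj[of x] by fastforce
  qed
qed (auto simp: ff_def)

lemma qdepth_tr: "qdepth (tr g M \<phi> ofs) \<le> qdepth \<phi>"
proof (induction \<phi> arbitrary: ofs)
  case (FBetween a x y) then show ?case
    using qdepth_disj[of "ff x" 0 "filter (\<lambda>c. a \<in> set (g c)) allL" "\<lambda>c. FBetween c x y"]
      qdepth_disj[of "ff y" 0 "filter (\<lambda>c. a \<in> set (g c)) allL" "\<lambda>c. FBetween c y x"]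
    by (auto simp: bt_def ff_def qdepth_ldisj)
next
  case (FNot \<phi>) then show ?case by simp
next
  case (FAnd \<phi> \<psi>) have "max (qdepth (tr g M \<phi> ofs)) (qdepth (tr g M \<psi> ofs)) \<le> max (qdepth \<phi>) (qdepth \<psi>)" using FAnd.IH[of ofs] by (rule max.mono) then show ?case by simp
next
  case (FOr \<phi> \<psi>) have "max (qdepth (tr g M \<phi> ofs)) (qdepth (tr g M \<psi> ofs)) \<le> max (qdepth \<phi>) (qdepth \<psi>)" using FOr.IH[of ofs] by (rule max.mono) then show ?case by simp
next
  case (FEx x \<phi>)
  show ?case by (simp, rule qdepth_disj) (use FEx.IH in \<open>auto simp: qdepth_ldisj\<close>)
qed (auto simp: ff_def qdepth_ldisj)


lemma between_gen:
  assumes "i < length w" "ox < length (g (w ! i))" "j < length w" "oy < length (g (w ! j))"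
  shows "(\<exists>z. min (enc g w i ox) (enc g w j oy) < z \<and> z < max (enc g w i ox) (enc g w j oy)
            \<and> z < length (concat (map g w)) \<and> concat (map g w) ! z = a)
       = (\<exists>m<length w. \<exists>r<length (g (w ! m)).
            min (enc g w i ox) (enc g w j oy) < enc g w m r \<and> enc g w m r < max (enc g w i ox) (enc g w j oy)
            \<and> g (w ! m) ! r = a)"
  by (metis enc_decomp enc_nth)

lemma between_lt:
  assumes "i < length w" "ox < length (g (w ! i))" "j < length w" "oy < length (g (w ! j))" "i < j"
  shows "(\<exists>z. min (enc g w i ox) (enc g w j oy) < z \<and> z < max (enc g w i ox) (enc g w j oy)
            \<and> z < length (concat (map g w)) \<and> concat (map g w) ! z = a)
       = ((\<exists>r. ox < r \<and> r < length (g (w ! i)) \<and> g (w ! i) ! r = a)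
          \<or> (\<exists>r. r < oy \<and> r < length (g (w ! j)) \<and> g (w ! j) ! r = a)
          \<or> (\<exists>m. i < m \<and> m < j \<and> a \<in> set (g (w ! m))))"
proof -
  have lt: "enc g w i ox < enc g w j oy" using enc_less[OF assms(1-4)] assms(5) by simp
  have "(\<exists>m<length w. \<exists>r<length (g (w ! m)).
            enc g w i ox < enc g w m r \<and> enc g w m r < enc g w j oy \<and> g (w ! m) ! r = a)
      = (\<exists>m<length w. \<exists>r<length (g (w ! m)).
            (i < m \<or> i = m \<and> ox < r) \<and> (m < j \<or> m = j \<and> r < oy) \<and> g (w ! m) ! r = a)"
    using enc_less assms(1-4) by (metis (no_types, lifting))
  also have "\<dots> = ((\<exists>r. ox < r \<and> r < length (g (w ! i)) \<and> g (w ! i) ! r = a)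
          \<or> (\<exists>r. r < oy \<and> r < length (g (w ! j)) \<and> g (w ! j) ! r = a)
          \<or> (\<exists>m. i < m \<and> m < j \<and> a \<in> set (g (w ! m))))"
    using assms by (auto simp: in_set_conv_nth dest: order.strict_trans[OF _ assms(3)])
  finally show ?thesis using between_gen[OF assms(1-4), of a] lt by (simp add: min_def max_def)
qed

lemma between_eq:
  assumes "i < length w" "ox < length (g (w ! i))" "oy < length (g (w ! i))"
  shows "(\<exists>z. min (enc g w i ox) (enc g w i oy) < z \<and> z < max (enc g w i ox) (enc g w i oy)
            \<and> z < length (concat (map g w)) \<and> concat (map g w) ! z = a)
       = (\<exists>r. min ox oy < r \<and> r < max ox oy \<and> r < length (g (w ! i)) \<and> g (w ! i) ! r = a)"
proof -
  have "(\<exists>m<length w. \<exists>r<length (g (w ! m)).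
            min (enc g w i ox) (enc g w i oy) < enc g w m r \<and> enc g w m r < max (enc g w i ox) (enc g w i oy)
            \<and> g (w ! m) ! r = a)
      = (\<exists>m<length w. \<exists>r<length (g (w ! m)).
            (m = i \<and> min ox oy < r \<and> r < max ox oy) \<and> g (w ! m) ! r = a)"
  proof -
    have "(min (enc g w i ox) (enc g w i oy) < enc g w m r \<and> enc g w m r < max (enc g w i ox) (enc g w i oy))
       = (m = i \<and> min ox oy < r \<and> r < max ox oy)" if "m < length w" "r < length (g (w ! m))" for m r
    proof (cases "ox \<le> oy")
      case True
      then show ?thesis using enc_less[OF assms(1,2) that] enc_less[OF that assms(1,3)]
        by (auto simp: min_def max_def enc_def)
    next
      case False
      then show ?thesis using enc_less[OF assms(1,3) that] enc_less[OF that assms(1,2)]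
        by (auto simp: min_def max_def enc_def)
    qed
    then show ?thesis by blast
  qed
  also have "\<dots> = (\<exists>r. min ox oy < r \<and> r < max ox oy \<and> r < length (g (w ! i)) \<and> g (w ! i) ! r = a)"
    using assms by auto
  finally show ?thesis using between_gen[of i w ox g i oy a, OF assms(1,2,1,3)] by simp
qed


definition inv_ok :: "('b \<Rightarrow> 'a list) \<Rightarrow> 'b list \<Rightarrow> (var \<Rightarrow> nat) \<Rightarrow> (var \<Rightarrow> nat) \<Rightarrow> (var \<Rightarrow> nat) \<Rightarrow> var \<Rightarrow> bool" where
  "inv_ok g w s s' ofs z \<longleftrightarrow> s z < length w \<and> ofs z < length (g (w ! s z)) \<and> s' z = enc g w (s z) (ofs z)"

lemma sat_disjB: "sat w s (disj (ff x) (filter (\<lambda>c. a \<in> set (g c)) allL) (\<lambda>c. FBetween c x y))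
  = (\<exists>m. min (s x) (s y) < m \<and> m < max (s x) (s y) \<and> m < length w \<and> a \<in> set (g (w ! m)))"
  by (auto simp: sat_disj ff_def set_allL)

lemma sat_bt:
  assumes "inv_ok g w s s' ofs x" "inv_ok g w s s' ofs y" "s x < s y"
  shows "sat w s (bt g a x y (ofs x) (ofs y)) =
    (\<exists>z. min (s' x) (s' y) < z \<and> z < max (s' x) (s' y) \<and> z < length (concat (map g w)) \<and> concat (map g w) ! z = a)"
proof -
  have "sat w s (bt g a x y (ofs x) (ofs y)) =
     ((\<exists>r. ofs x < r \<and> r < length (g (w ! s x)) \<and> g (w ! s x) ! r = a)
          \<or> (\<exists>r. r < ofs y \<and> r < length (g (w ! s y)) \<and> g (w ! s y) ! r = a)
          \<or> (\<exists>m. s x < m \<and> m < s y \<and> a \<in> set (g (w ! m))))"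
    using assms unfolding bt_def inv_ok_def
    by (auto simp add: sat_ldisj sat_disjB dest: order.strict_trans)
  also have "\<dots> = (\<exists>z. min (s' x) (s' y) < z \<and> z < max (s' x) (s' y) \<and> z < length (concat (map g w)) \<and> concat (map g w) ! z = a)"
    using between_lt[of "s x" w "ofs x" g "s y" "ofs y" a] assms unfolding inv_ok_def by simp
  finally show ?thesis .
qed

lemma sat_tr:
  assumes M: "\<And>b. length (g b) < M"
  shows "(\<And>z. z \<in> fvars \<phi> \<Longrightarrow> inv_ok g w s s' ofs z) \<Longrightarrow>
    sat (concat (map g w)) s' \<phi> = sat w s (tr g M \<phi> ofs)"
proof (induction \<phi> arbitrary: s s' ofs)
  case (FLess x y)
  then have "inv_ok g w s s' ofs x" "inv_ok g w s s' ofs y" by auto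
  then show ?case using enc_less[of "s x" w "ofs x" g "s y" "ofs y"] by (auto simp: inv_ok_def)
next
  case (FEq x y)
  then have "inv_ok g w s s' ofs x" "inv_ok g w s s' ofs y" by auto
  then have e1: "(s' x < s' y) = (s x < s y \<or> s x = s y \<and> ofs x < ofs y)"
    and e2: "(s' y < s' x) = (s y < s x \<or> s y = s x \<and> ofs y < ofs x)"
    using enc_less[of "s x" w "ofs x" g "s y" "ofs y"] enc_less[of "s y" w "ofs y" g "s x" "ofs x"]
    by (auto simp: inv_ok_def)
  have "(s' x = s' y) = (\<not> s' x < s' y \<and> \<not> s' y < s' x)" by auto
  also have "\<dots> = (s x = s y \<and> ofs x = ofs y)" unfolding e1 e2 by auto
  finally show ?case by (auto simp: ff_def)
next
  case (FLetter a x)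
  then have "inv_ok g w s s' ofs x" by auto
  then show ?case using enc_nth[of "s x" w "ofs x" g] by (auto simp: inv_ok_def sat_ldisj)
next
  case (FBetween a x y)
  then have ix: "inv_ok g w s s' ofs x" and iy: "inv_ok g w s s' ofs y" by auto
  consider "s x < s y" | "s y < s x" | "s x = s y" by linarith
  then show ?case
  proof cases
    case 1 then show ?thesis using sat_bt[OF ix iy] by simp
  next
    case 2 then show ?thesis using sat_bt[OF iy ix] by (simp add: min.commute max.commute)
  next
    case 3
    have "sat w s (ldisj x (\<lambda>b. \<exists>r. min (ofs x) (ofs y) < r \<and> r < max (ofs x) (ofs y) \<and> r < length (g b) \<and> g b ! r = a))
      = (\<exists>r. min (ofs x) (ofs y) < r \<and> r < max (ofs x) (ofs y) \<and> r < length (g (w ! s x)) \<and> g (w ! s x) ! r = a)"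
      using ix by (simp add: sat_ldisj inv_ok_def)
    also have "\<dots> = sat (concat (map g w)) s' (FBetween a x y)"
      using between_eq[of "s x" w "ofs x" g "ofs y" a] ix iy 3 by (simp add: inv_ok_def)
    finally show ?thesis using 3 by simp
  qed
next
  case (FNot \<phi>) then show ?case by simp
next
  case (FAnd \<phi> \<psi>)
  have "sat (concat (map g w)) s' \<phi> = sat w s (tr g M \<phi> ofs)" by (rule FAnd.IH(1)) (simp add: FAnd.prems)
  moreover have "sat (concat (map g w)) s' \<psi> = sat w s (tr g M \<psi> ofs)" by (rule FAnd.IH(2)) (simp add: FAnd.prems)
  ultimately show ?case by simp
next
  case (FOr \<phi> \<psi>)
  have "sat (concat (map g w)) s' \<phi> = sat w s (tr g M \<phi> ofs)" by (rule FOr.IH(1)) (simp add: FOr.prems)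
  moreover have "sat (concat (map g w)) s' \<psi> = sat w s (tr g M \<psi> ofs)" by (rule FOr.IH(2)) (simp add: FOr.prems)
  ultimately show ?case by simp
next
  case (FEx x \<phi>)
  let ?W = "concat (map g w)"
  have step: "sat ?W (s'(x := enc g w i r)) \<phi> = sat w (s(x := i)) (tr g M \<phi> (ofs(x := r)))"
    if "i < length w" "r < length (g (w ! i))" for i r
    by (rule FEx.IH) (use FEx.prems that in \<open>auto simp: inv_ok_def\<close>)
  have "sat w s (tr g M (FEx x \<phi>) ofs) =
     (\<exists>r<M. \<exists>i<length w. r < length (g (w ! i)) \<and> sat w (s(x := i)) (tr g M \<phi> (ofs(x := r))))"
  proof -
    have A: "sat w s (tr g M (FEx x \<phi>) ofs) =
     (\<exists>r\<in>insert 0 (set [1..<M]). \<exists>i<length w. r < length (g (w ! i)) \<and> sat w (s(x := i)) (tr g M \<phi> (ofs(x := r))))"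
    proof -
      define h where "h = (\<lambda>r. FEx x (FAnd (ldisj x (\<lambda>b. r < length (g b))) (tr g M \<phi> (ofs(x := r)))))"
      have "tr g M (FEx x \<phi>) ofs = disj (h 0) [1..<M] h" by (simp add: h_def)
      then have "sat w s (tr g M (FEx x \<phi>) ofs) = (\<exists>r\<in>insert 0 (set [1..<M]). sat w s (h r))"
        by (simp only: sat_disj) auto
      moreover have "sat w s (h r) = (\<exists>i<length w. r < length (g (w ! i)) \<and> sat w (s(x := i)) (tr g M \<phi> (ofs(x := r))))" for r
        by (auto simp: h_def sat_ldisj)
      ultimately show ?thesis by simp
    qed
    have B: "insert 0 (set [1..<M]) = {..<M}" using M[of undefined] by auto
    show ?thesis unfolding A B by auto
  qed
  also have "\<dots> = (\<exists>i<length w. \<exists>r<length (g (w ! i)). sat w (s(x := i)) (tr g M \<phi> (ofs(x := r))))"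
    using M less_trans by blast
  also have "\<dots> = (\<exists>i<length w. \<exists>r<length (g (w ! i)). sat ?W (s'(x := enc g w i r)) \<phi>)"
    using step by auto
  also have "\<dots> = sat ?W s' (FEx x \<phi>)"
  proof
    assume "\<exists>i<length w. \<exists>r<length (g (w ! i)). sat ?W (s'(x := enc g w i r)) \<phi>"
    then obtain i r where "i < length w" "r < length (g (w ! i))" "sat ?W (s'(x := enc g w i r)) \<phi>" by blast
    then show "sat ?W s' (FEx x \<phi>)" using enc_nth[of i w r g] by auto
  next
    assume "sat ?W s' (FEx x \<phi>)"
    then obtain p where p: "p < length ?W" "sat ?W (s'(x := p)) \<phi>" by auto
    then obtain i r where "i < length w" "r < length (g (w ! i))" "p = enc g w i r" using enc_decomp by blast
    then show "\<exists>i<length w. \<exists>r<length (g (w ! i)). sat ?W (s'(x := enc g w i r)) \<phi>" using p by blast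
  qed
  finally show ?case by simp
qed


lemma hom_concat: "monoid_hom f \<Longrightarrow> f w = concat (map (\<lambda>b. f [b]) w)"
proof (induction w)
  case Nil then show ?case by (simp add: monoid_hom_def)
next
  case (Cons b w)
  then have "f (b # w) = f [b] @ f w" unfolding monoid_hom_def by (metis append_Cons append_Nil)
  then show ?case using Cons by simp
qed

theorem lemma13:
  fixes k :: nat
    and f :: "'b::finite list \<Rightarrow> 'a::finite list"
    and w1 w2 :: "'b list"
  assumes "monoid_hom f"
    and "fo2_equiv k w1 w2"
  shows "fo2_equiv k (f w1) (f w2)"
proof -
  define g where "g = (\<lambda>b. f [b])"
  define M where "M = Suc (Max (range (\<lambda>b. length (g b))))"
  have M: "length (g b) < M" for b
    unfolding M_def
    apply (rule le_imp_less_Suc)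
    apply (rule Max_ge[OF finite_imageI[OF finite_UNIV]])
    apply (rule rangeI)
    done
  have fw: "f w = concat (map g w)" for w unfolding g_def by (rule hom_concat[OF assms(1)])
  have key: "models (f w) \<phi> = models w (tr g M \<phi> (\<lambda>_. 0))" if "sentence \<phi>" for w \<phi>
    unfolding models_def fw
    by (rule sat_tr[OF M]) (use that in \<open>simp add: sentence_def\<close>)
  show ?thesis unfolding fo2_equiv_def
  proof (intro allI impI)
    fix \<phi> :: "'a fo2" assume h: "sentence \<phi> \<and> qdepth \<phi> \<le> k"
    have "sentence (tr g M \<phi> (\<lambda>_. 0)) \<and> qdepth (tr g M \<phi> (\<lambda>_. 0)) \<le> k"
      using h fvars_tr[of g M \<phi> "\<lambda>_. 0"] qdepth_tr[of g M \<phi> "\<lambda>_. 0"] by (auto simp: sentence_def)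
    then show "models (f w1) \<phi> = models (f w2) \<phi>"
      using assms(2) key h unfolding fo2_equiv_def by blast
  qed
qed

end
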